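(* For every $k\ge1$, every $1\le p\le k$, all integers $m_1,\dots,m_k$ and every $n\ge0$, $$\mathcal D_k(m_1,\dots,m_{p-1},m_p,m_{p+1},\dots,m_k;n)=\mathcal D_k(m_1,\dots,m_{p-1},-m_p,m_{p+1},\dots,m_k;n).$$
   Context: A partition is a finite nonincreasing sequence $\lambda=(\lambda_1,\dots,\lambda_r)$ of positive integers (possibly empty); $l(\lambda)=r$, $|\lambda|=\sum\lambda_i$, $\lambda_1$ the largest part. Let $k\ge1$. A $k$-marked Durfee symbol of $n$ is an array $\eta=\begin{pmatrix}\alpha^k,&\dots,&\alpha^1\\ \beta^k,&\dots,&\beta^1\end{pmatrix}_D$ consisting of an integer $D\ge0$ and $2k$ partitions $\alpha^i,\beta^i$ with $\sum_{i=1}^k(|\alpha^i|+|\beta^i|)+D^2=n$, such that: (1) $\alpha^i$ is nonempty for $1\le i<k$; (2) for $1\le i<k$ every part of $\beta^i$ is $\le\alpha^i_1$, and for $2\le i\le k$ every part of $\alpha^i$ and every part of $\beta^i$ is $\ge\alpha^{i-1}_1$; (3) all parts of $\alpha^k$ and $\beta^k$ are $\le D$. The $i$th rank is $\rho_i(\eta)=l(\alpha^i)-l(\beta^i)-1$ for $1\le i<k$ and $\rho_k(\eta)=l(\alpha^k)-l(\beta^k)$. $\mathcal D_k(m_1,\dots,m_k;n)$ is the number of $k$-marked Durfee symbols of $n$ with $\rho_i=m_i$ for all $i$. *)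

theory Defs
  imports Main
begin

definition is_partition :: "nat list \<Rightarrow> bool" where
  "is_partition lam \<longleftrightarrow> sorted_wrt (\<ge>) lam \<and> (\<forall>x\<in>set lam. 0 < x)"

text \<open>A k-marked Durfee symbol of n is encoded as a triple (D, as, bs) where
  as ! (i-1) is alpha^i and bs ! (i-1) is beta^i, for 1 <= i <= k.\<close>
definition is_durfee_symbol :: "nat \<Rightarrow> nat \<Rightarrow> nat \<times> nat list list \<times> nat list list \<Rightarrow> bool" where
  "is_durfee_symbol k n s \<longleftrightarrow> (case s of (D, as, bs) \<Rightarrow>
     length as = k \<and> length bs = k \<and>
     (\<forall>i<k. is_partition (as ! i) \<and> is_partition (bs ! i)) \<and>
     (\<Sum>i<k. sum_list (as ! i) + sum_list (bs ! i)) + D\<^sup>2 = n \<and>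
     (\<forall>i. 1 \<le> i \<and> i < k \<longrightarrow> as ! (i - 1) \<noteq> []) \<and>
     (\<forall>i. 1 \<le> i \<and> i < k \<longrightarrow> (\<forall>x\<in>set (bs ! (i - 1)). x \<le> hd (as ! (i - 1)))) \<and>
     (\<forall>i. 2 \<le> i \<and> i \<le> k \<longrightarrow>
        (\<forall>x\<in>set (as ! (i - 1)) \<union> set (bs ! (i - 1)). hd (as ! (i - 2)) \<le> x)) \<and>
     (\<forall>x\<in>set (as ! (k - 1)) \<union> set (bs ! (k - 1)). x \<le> D))"

definition durfee_rank :: "nat \<Rightarrow> nat \<Rightarrow> nat \<times> nat list list \<times> nat list list \<Rightarrow> int" where
  "durfee_rank k i s = (case s of (D, as, bs) \<Rightarrow>
     int (length (as ! (i - 1))) - int (length (bs ! (i - 1))) - (if i < k then 1 else 0))"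

text \<open>D_k(m_1,...,m_k; n), with ms ! (i-1) = m_i.\<close>
definition Dk :: "nat \<Rightarrow> int list \<Rightarrow> nat \<Rightarrow> nat" where
  "Dk k ms n = card {s. is_durfee_symbol k n s \<and>
      (\<forall>i. 1 \<le> i \<and> i \<le> k \<longrightarrow> durfee_rank k i s = ms ! (i - 1))}"

end

theory Submission
  imports Defs
begin

lemma transfer_sym:
  assumes S: "is_durfee_symbol k n (D, as, bs)" and k: "1 \<le> k"
    and l: "length as' = k" "length bs' = k"
    and P: "\<forall>j<k. is_partition (as'!j) \<and> is_partition (bs'!j)"
    and Sm: "\<forall>j<k. sum_list (as'!j) + sum_list (bs'!j) = sum_list (as!j) + sum_list (bs!j)"
    and St: "\<forall>j<k. set (as'!j) \<union> set (bs'!j) = set (as!j) \<union> set (bs!j)"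
    and H: "\<forall>j. Suc j < k \<longrightarrow> as'!j \<noteq> [] \<and> hd (as'!j) = hd (as!j) \<and> (\<forall>x\<in>set (bs'!j). x \<le> hd (as'!j))"
  shows "is_durfee_symbol k n (D, as', bs')"
proof -
  from S have s1: "(\<Sum>i<k. sum_list (as ! i) + sum_list (bs ! i)) + D\<^sup>2 = n"
    and s2: "\<forall>i. 2 \<le> i \<and> i \<le> k \<longrightarrow>
        (\<forall>x\<in>set (as ! (i - 1)) \<union> set (bs ! (i - 1)). hd (as ! (i - 2)) \<le> x)"
    and s3: "\<forall>x\<in>set (as ! (k - 1)) \<union> set (bs ! (k - 1)). x \<le> D"
    unfolding is_durfee_symbol_def by auto
  have "(\<Sum>i<k. sum_list (as' ! i) + sum_list (bs' ! i)) = (\<Sum>i<k. sum_list (as ! i) + sum_list (bs ! i))"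
    using Sm by (intro sum.cong) auto
  moreover have "\<forall>i. 2 \<le> i \<and> i \<le> k \<longrightarrow>
        (\<forall>x\<in>set (as' ! (i - 1)) \<union> set (bs' ! (i - 1)). hd (as' ! (i - 2)) \<le> x)"
  proof (intro allI impI)
    fix i assume i: "2 \<le> i \<and> i \<le> k"
    have "set (as' ! (i - 1)) \<union> set (bs' ! (i - 1)) = set (as ! (i - 1)) \<union> set (bs ! (i - 1))"
    proof -
      have "i - 1 < k" using i by (cases i) auto
      then show ?thesis using St by blast
    qed
    moreover have "hd (as' ! (i - 2)) = hd (as ! (i - 2))"
    proof -
      have "Suc (i - 2) < k" using i by arith
      then show ?thesis using H by blast
    qed
    ultimately show "\<forall>x\<in>set (as' ! (i - 1)) \<union> set (bs' ! (i - 1)). hd (as' ! (i - 2)) \<le> x"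
      using s2 i by auto
  qed
  moreover have "\<forall>x\<in>set (as' ! (k - 1)) \<union> set (bs' ! (k - 1)). x \<le> D"
  proof -
    have "k - 1 < k" using k by arith
    then have "set (as' ! (k - 1)) \<union> set (bs' ! (k - 1)) = set (as ! (k - 1)) \<union> set (bs ! (k - 1))"
      using St by blast
    then show ?thesis using s3 by simp
  qed
  moreover have "\<forall>i. 1 \<le> i \<and> i < k \<longrightarrow> as' ! (i - 1) \<noteq> []"
  proof (intro allI impI)
    fix i assume "1 \<le> i \<and> i < k"
    then have "Suc (i - 1) < k" by arith
    then show "as' ! (i - 1) \<noteq> []" using H by blast
  qed
  moreover have "\<forall>i. 1 \<le> i \<and> i < k \<longrightarrow> (\<forall>x\<in>set (bs' ! (i - 1)). x \<le> hd (as' ! (i - 1)))"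
  proof (intro allI impI)
    fix i assume "1 \<le> i \<and> i < k"
    then have "Suc (i - 1) < k" by arith
    then show "\<forall>x\<in>set (bs' ! (i - 1)). x \<le> hd (as' ! (i - 1))" using H by blast
  qed
  ultimately show ?thesis using l P s1 unfolding is_durfee_symbol_def by auto
qed

definition flip :: "nat \<Rightarrow> nat \<Rightarrow> nat \<times> nat list list \<times> nat list list \<Rightarrow> nat \<times> nat list list \<times> nat list list" where
  "flip k q s = (case s of (D, as, bs) \<Rightarrow> if Suc q < k
     then (D, as[q := hd (as!q) # bs!q], bs[q := tl (as!q)])
     else (D, as[q := bs!q], bs[q := as!q]))"

lemma part_tl: "is_partition a \<Longrightarrow> is_partition (tl a)"
  unfolding is_partition_def by (cases a) auto

lemma part_cons: "is_partition a \<Longrightarrow> a \<noteq> [] \<Longrightarrow> is_partition b \<Longrightarrow> \<forall>x\<in>set b. x \<le> hd a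
  \<Longrightarrow> is_partition (hd a # b)"
  unfolding is_partition_def by (cases a) auto

lemma hd_tl_le: "is_partition a \<Longrightarrow> \<forall>x\<in>set (tl a). x \<le> hd a"
  unfolding is_partition_def by (cases a) auto

lemma flip_sym:
  assumes S: "is_durfee_symbol k n s" and q: "q < k"
  shows "is_durfee_symbol k n (flip k q s)"
proof -
  obtain D as bs where s: "s = (D, as, bs)" by (cases s)
  from S[unfolded s is_durfee_symbol_def] have
    l: "length as = k" "length bs = k" and P: "\<forall>i<k. is_partition (as ! i) \<and> is_partition (bs ! i)"
    and ne: "\<forall>i. 1 \<le> i \<and> i < k \<longrightarrow> as ! (i - 1) \<noteq> []"
    and bl: "\<forall>i. 1 \<le> i \<and> i < k \<longrightarrow> (\<forall>x\<in>set (bs ! (i - 1)). x \<le> hd (as ! (i - 1)))"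
    by auto
  have ne': "\<forall>j. Suc j < k \<longrightarrow> as ! j \<noteq> []" using ne[rule_format, of "Suc _"] by simp
  have bl': "\<forall>j. Suc j < k \<longrightarrow> (\<forall>x\<in>set (bs ! j). x \<le> hd (as ! j))" using bl[rule_format, of "Suc _"] by simp
  have k: "1 \<le> k" using q by simp
  show ?thesis
  proof (cases "Suc q < k")
    case True
    have aq: "as ! q \<noteq> []" using ne' True by auto
    have e: "flip k q s = (D, as[q := hd (as!q) # bs!q], bs[q := tl (as!q)])"
      using True by (simp add: flip_def s)
    show ?thesis unfolding e
    proof (rule transfer_sym[OF S[unfolded s] k])
      show "\<forall>j<k. is_partition (as[q := hd (as ! q) # bs ! q] ! j) \<and> is_partition (bs[q := tl (as ! q)] ! j)"
        using P l q aq bl' True by (auto simp: nth_list_update part_tl part_cons)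
      show "\<forall>j<k. sum_list (as[q := hd (as ! q) # bs ! q] ! j) + sum_list (bs[q := tl (as ! q)] ! j) =
          sum_list (as ! j) + sum_list (bs ! j)"
      proof (intro allI impI)
        fix j assume "j < k"
        then show "sum_list (as[q := hd (as ! q) # bs ! q] ! j) + sum_list (bs[q := tl (as ! q)] ! j) =
          sum_list (as ! j) + sum_list (bs ! j)"
          using l aq by (cases "j = q"; cases "as!q") (auto simp: nth_list_update)
      qed
      show "\<forall>j<k. set (as[q := hd (as ! q) # bs ! q] ! j) \<union> set (bs[q := tl (as ! q)] ! j) = set (as ! j) \<union> set (bs ! j)"
      proof (intro allI impI)
        fix j assume "j < k"
        then show "set (as[q := hd (as ! q) # bs ! q] ! j) \<union> set (bs[q := tl (as ! q)] ! j) = set (as ! j) \<union> set (bs ! j)"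
          using l aq by (cases "j = q"; cases "as!q") (auto simp: nth_list_update)
      qed
      show "\<forall>j. Suc j < k \<longrightarrow> as[q := hd (as ! q) # bs ! q] ! j \<noteq> [] \<and>
          hd (as[q := hd (as ! q) # bs ! q] ! j) = hd (as ! j) \<and>
          (\<forall>x\<in>set (bs[q := tl (as ! q)] ! j). x \<le> hd (as[q := hd (as ! q) # bs ! q] ! j))"
        using l ne' bl' P q by (auto simp: nth_list_update hd_tl_le)
    qed (use l in auto)
  next
    case False
    have e: "flip k q s = (D, as[q := bs!q], bs[q := as!q])"
      using False by (simp add: flip_def s)
    show ?thesis unfolding e
    proof (rule transfer_sym[OF S[unfolded s] k])
      show "\<forall>j<k. is_partition (as[q := bs ! q] ! j) \<and> is_partition (bs[q := as ! q] ! j)"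
        using P l q by (auto simp: nth_list_update)
      show "\<forall>j<k. sum_list (as[q := bs ! q] ! j) + sum_list (bs[q := as ! q] ! j) =
          sum_list (as ! j) + sum_list (bs ! j)"
      proof (intro allI impI)
        fix j assume "j < k"
        then show "sum_list (as[q := bs ! q] ! j) + sum_list (bs[q := as ! q] ! j) =
          sum_list (as ! j) + sum_list (bs ! j)"
          using l by (cases "j = q") simp_all
      qed
      show "\<forall>j<k. set (as[q := bs ! q] ! j) \<union> set (bs[q := as ! q] ! j) = set (as ! j) \<union> set (bs ! j)"
      proof (intro allI impI)
        fix j assume "j < k"
        then show "set (as[q := bs ! q] ! j) \<union> set (bs[q := as ! q] ! j) = set (as ! j) \<union> set (bs ! j)"
          using l by (cases "j = q") (simp_all add: Un_commute)
      qed
      show "\<forall>j. Suc j < k \<longrightarrow> as[q := bs ! q] ! j \<noteq> [] \<and> hd (as[q := bs ! q] ! j) = hd (as ! j) \<and>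
          (\<forall>x\<in>set (bs[q := as ! q] ! j). x \<le> hd (as[q := bs ! q] ! j))"
        using l ne' bl' False by (auto simp: nth_list_update)
    qed (use l in auto)
  qed
qed

lemma flip_flip:
  assumes S: "is_durfee_symbol k n s" and q: "q < k"
  shows "flip k q (flip k q s) = s"
proof -
  obtain D as bs where s: "s = (D, as, bs)" by (cases s)
  from S[unfolded s is_durfee_symbol_def] have
    l: "length as = k" "length bs = k"
    and ne: "\<forall>i. 1 \<le> i \<and> i < k \<longrightarrow> as ! (i - 1) \<noteq> []"
    by auto
  show ?thesis
  proof (cases "Suc q < k")
    case True
    have aq: "as ! q \<noteq> []" using ne[rule_format, of "Suc q"] True by simp
    then show ?thesis using True l q by (simp add: flip_def s)
  next
    case False
    then show ?thesis using l q by (simp add: flip_def s list_update_swap)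
  qed
qed

lemma flip_rank:
  assumes S: "is_durfee_symbol k n s" and q: "q < k" and i: "1 \<le> i" "i \<le> k"
  shows "durfee_rank k i (flip k q s) = (if i = Suc q then - durfee_rank k i s else durfee_rank k i s)"
proof -
  obtain D as bs where s: "s = (D, as, bs)" by (cases s)
  from S[unfolded s is_durfee_symbol_def] have
    l: "length as = k" "length bs = k"
    and ne: "\<forall>i. 1 \<le> i \<and> i < k \<longrightarrow> as ! (i - 1) \<noteq> []"
    by auto
  show ?thesis
  proof (cases "Suc q < k")
    case True
    have aq: "as ! q \<noteq> []" using ne[rule_format, of "Suc q"] True by simp
    then obtain a r where ar: "as ! q = a # r" by (cases "as!q") auto
    show ?thesis using True l q i ar by (auto simp: flip_def s durfee_rank_def nth_list_update)
  next
    case False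
    then show ?thesis using l q i by (auto simp: flip_def s durfee_rank_def nth_list_update)
  qed
qed

lemma flip_maps:
  assumes "1 \<le> p" "p \<le> k" "length ms = k"
    and "s \<in> {s. is_durfee_symbol k n s \<and> (\<forall>i. 1 \<le> i \<and> i \<le> k \<longrightarrow> durfee_rank k i s = ms ! (i - 1))}"
  shows "flip k (p - 1) s \<in> {s. is_durfee_symbol k n s \<and>
     (\<forall>i. 1 \<le> i \<and> i \<le> k \<longrightarrow> durfee_rank k i s = ms[p - 1 := - (ms ! (p - 1))] ! (i - 1))}"
proof -
  have S: "is_durfee_symbol k n s" and R: "\<forall>i. 1 \<le> i \<and> i \<le> k \<longrightarrow> durfee_rank k i s = ms ! (i - 1)"
    using assms(4) by auto
  have q: "p - 1 < k" using assms by simp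
  have "\<forall>i. 1 \<le> i \<and> i \<le> k \<longrightarrow> durfee_rank k i (flip k (p - 1) s) = ms[p - 1 := - (ms ! (p - 1))] ! (i - 1)"
  proof (intro allI impI)
    fix i assume i: "1 \<le> i \<and> i \<le> k"
    show "durfee_rank k i (flip k (p - 1) s) = ms[p - 1 := - (ms ! (p - 1))] ! (i - 1)"
      using flip_rank[OF S q, of i] R i assms(1-3)
      by (cases "i = p") (auto simp: nth_list_update)
  qed
  then show ?thesis using flip_sym[OF S q] by auto
qed

theorem mainTheorem10:
  fixes k p n :: nat and ms :: "int list"
  assumes "1 \<le> k" and "1 \<le> p" and "p \<le> k" and "length ms = k"
  shows "Dk k ms n = Dk k (ms[p - 1 := - (ms ! (p - 1))]) n"
proof -
  define ms2 where "ms2 = ms[p - 1 := - (ms ! (p - 1))]"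
  have l': "length ms2 = k" using assms unfolding ms2_def by simp
  have hback: "ms2[p - 1 := - (ms2 ! (p - 1))] = ms" using assms by (auto simp: ms2_def)
  have q: "p - 1 < k" using assms by simp
  define A where "A = {s. is_durfee_symbol k n s \<and> (\<forall>i. 1 \<le> i \<and> i \<le> k \<longrightarrow> durfee_rank k i s = ms ! (i - 1))}"
  define B where "B = {s. is_durfee_symbol k n s \<and> (\<forall>i. 1 \<le> i \<and> i \<le> k \<longrightarrow> durfee_rank k i s = ms2 ! (i - 1))}"
  have fA: "flip k (p - 1) s \<in> B" if "s \<in> A" for s
    using flip_maps[OF assms(2,3,4) that[unfolded A_def]] unfolding B_def ms2_def .
  have fB: "flip k (p - 1) s \<in> A" if "s \<in> B" for s
    using flip_maps[OF assms(2,3) l' that[unfolded B_def]] unfolding A_def hback .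
  have iA: "flip k (p - 1) (flip k (p - 1) s) = s" if "s \<in> A" for s
    using flip_flip[OF _ q] that unfolding A_def by blast
  have iB: "flip k (p - 1) (flip k (p - 1) s) = s" if "s \<in> B" for s
    using flip_flip[OF _ q] that unfolding B_def by blast
  have "bij_betw (flip k (p - 1)) A B"
    by (rule bij_betw_byWitness[where f' = "flip k (p - 1)"]) (use fA fB iA iB in auto)
  then have "card A = card B" by (rule bij_betw_same_card)
  then show ?thesis unfolding Dk_def A_def B_def ms2_def .
qed

end
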